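(* Let $\mu,\nu\in\mathfrak h^*_{\mathbb R}$ be small. If $\mu-\nu\in Q^\vee$, then $\mu=\nu$.
   Context: $\mathfrak h$ is a Cartan subalgebra of a complex semisimple Lie algebra with root system $\Delta\subset\mathfrak h^*$, invariant bilinear form $(\cdot,\cdot)$ normalized by $(\alpha,\alpha)=2$ for short roots, coroots $\alpha^\vee=2\alpha/(\alpha,\alpha)$ regarded in $\mathfrak h^*_{\mathbb R}$ via the form, and $Q^\vee$ the coroot lattice. A weight $\nu\in\mathfrak h^*_{\mathbb R}$ is called small if $(\nu,\alpha)<1$ for every $\alpha\in\Delta$. *)

theory Defs
  imports "HOL-Analysis.Analysis"
begin

text \<open>The real form h*_R is modelled by a Euclidean space type 'a; the invariant
bilinear form is its inner product.\<close>

definition root_reflection :: "'a::euclidean_space \<Rightarrow> 'a \<Rightarrow> 'a" where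
  "root_reflection \<alpha> x = x - (2 * (x \<bullet> \<alpha>) / (\<alpha> \<bullet> \<alpha>)) *\<^sub>R \<alpha>"

text \<open>Reduced crystallographic root system spanning the space
(root system of a complex semisimple Lie algebra).\<close>
definition root_system :: "'a::euclidean_space set \<Rightarrow> bool" where
  "root_system R \<longleftrightarrow>
     finite R \<and> 0 \<notin> R \<and> span R = UNIV \<and>
     (\<forall>\<alpha>\<in>R. root_reflection \<alpha> ` R \<subseteq> R) \<and>
     (\<forall>\<alpha>\<in>R. \<forall>\<beta>\<in>R. 2 * (\<beta> \<bullet> \<alpha>) / (\<alpha> \<bullet> \<alpha>) \<in> \<int>) \<and>
     (\<forall>\<alpha>\<in>R. \<forall>c::real. c *\<^sub>R \<alpha> \<in> R \<longrightarrow> c = 1 \<or> c = -1)"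

text \<open>Two roots lie in the same irreducible component (simple ideal).\<close>
definition same_component :: "'a::euclidean_space set \<Rightarrow> 'a \<Rightarrow> 'a \<Rightarrow> bool" where
  "same_component R \<alpha> \<beta> \<longleftrightarrow>
     (\<lambda>x y. x \<in> R \<and> y \<in> R \<and> x \<bullet> y \<noteq> 0)\<^sup>*\<^sup>* \<alpha> \<beta>"

definition short_root :: "'a::euclidean_space set \<Rightarrow> 'a \<Rightarrow> bool" where
  "short_root R \<alpha> \<longleftrightarrow> \<alpha> \<in> R \<and> (\<forall>\<beta>\<in>R. same_component R \<alpha> \<beta> \<longrightarrow> \<alpha> \<bullet> \<alpha> \<le> \<beta> \<bullet> \<beta>)"

definition normalized_form :: "'a::euclidean_space set \<Rightarrow> bool" where
  "normalized_form R \<longleftrightarrow> (\<forall>\<alpha>. short_root R \<alpha> \<longrightarrow> \<alpha> \<bullet> \<alpha> = 2)"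

definition coroot :: "'a::euclidean_space \<Rightarrow> 'a" where
  "coroot \<alpha> = (2 / (\<alpha> \<bullet> \<alpha>)) *\<^sub>R \<alpha>"

definition coroot_lattice :: "'a::euclidean_space set \<Rightarrow> 'a set" where
  "coroot_lattice R = {x. \<exists>c::'a \<Rightarrow> int. x = (\<Sum>\<alpha>\<in>R. of_int (c \<alpha>) *\<^sub>R coroot \<alpha>)}"

definition small :: "'a::euclidean_space set \<Rightarrow> 'a \<Rightarrow> bool" where
  "small R \<nu> \<longleftrightarrow> (\<forall>\<alpha>\<in>R. \<nu> \<bullet> \<alpha> < 1)"

end

theory Submission
  imports Defs
begin

lemma rs_neg:
  assumes "root_system R" "a \<in> R" shows "- a \<in> R"
proof -
  have "a \<noteq> 0" using assms unfolding root_system_def by auto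
  hence "root_reflection a a = - a"
    by (simp add: root_reflection_def algebra_simps scaleR_2)
  thus ?thesis using assms unfolding root_system_def by force
qed

lemma rs_nz: "root_system R \<Longrightarrow> a \<in> R \<Longrightarrow> a \<bullet> a > 0"
  unfolding root_system_def by auto

lemma coroot_neg: "coroot (- a) = - coroot a"
  by (simp add: coroot_def)

lemma sum_list_inner: "sum_list (map f xs) \<bullet> y = sum_list (map (\<lambda>x. f x \<bullet> y) xs)"
  by (induction xs) (auto simp: inner_add_left)

lemma sum_list_Ints: "(\<And>x. x \<in> set xs \<Longrightarrow> f x \<in> \<int>) \<Longrightarrow> sum_list (map f xs) \<in> (\<int>::real set)"
  by (induction xs) auto

lemma sum_list_nonpos: "(\<And>x. x \<in> set xs \<Longrightarrow> f x \<le> (0::real)) \<Longrightarrow> sum_list (map f xs) \<le> 0"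
  by (induction xs) (auto intro: add_nonpos_nonpos)

lemma sum_list_rep0: "sum_list (replicate n x) = of_nat n *\<^sub>R (x :: 'b::real_vector)"
  by (induction n) (auto simp: algebra_simps)

lemma sum_list_rep: "sum_list (map f (replicate n a)) = of_nat n *\<^sub>R (f a :: 'b::real_vector)"
  by (simp add: sum_list_rep0)

lemma single_term:
  assumes "root_system R" "a \<in> R"
  shows "\<exists>bs. set bs \<subseteq> R \<and> of_int k *\<^sub>R coroot a = sum_list (map coroot bs)"
proof (cases "k \<ge> 0")
  case True
  show ?thesis
    apply (rule exI[of _ "replicate (nat k) a"])
    using True assms by (auto simp: sum_list_rep0)
next
  case False
  have "of_int k *\<^sub>R coroot a = of_nat (nat (-k)) *\<^sub>R coroot (-a)"
    using False by (simp add: coroot_neg)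
  thus ?thesis
    apply -
    apply (rule exI[of _ "replicate (nat (-k)) (-a)"])
    using assms rs_neg[OF assms] by (auto simp: sum_list_rep0)
qed

lemma lattice_list:
  assumes "root_system R" "finite S" "S \<subseteq> R"
  shows "\<exists>bs. set bs \<subseteq> R \<and> (\<Sum>a\<in>S. of_int (c a) *\<^sub>R coroot a) = sum_list (map coroot bs)"
  using assms(2,3)
proof (induction S rule: finite_induct)
  case empty
  then show ?case by (auto intro: exI[of _ "[]"])
next
  case (insert x F)
  obtain bs where bs: "set bs \<subseteq> R" "(\<Sum>a\<in>F. of_int (c a) *\<^sub>R coroot a) = sum_list (map coroot bs)"
    using insert by auto
  obtain cs where cs: "set cs \<subseteq> R" "of_int (c x) *\<^sub>R coroot x = sum_list (map coroot cs)"
    using single_term[OF assms(1)] insert by blast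
  show ?case
    apply (rule exI[of _ "cs @ bs"])
    using insert bs cs by auto
qed

lemma key:
  assumes rs: "root_system R"
  shows "set bs \<subseteq> R \<Longrightarrow> l = sum_list (map coroot bs) \<Longrightarrow> (\<forall>a\<in>R. \<bar>l \<bullet> a\<bar> < 2) \<Longrightarrow> l = 0"
proof (induction "length bs" arbitrary: bs l rule: less_induct)
  case less
  show ?case
  proof (rule ccontr)
    assume nz: "l \<noteq> 0"
    have ll: "l \<bullet> l = sum_list (map (\<lambda>b. coroot b \<bullet> l) bs)"
      using less.prems(2) sum_list_inner by metis
    have "\<exists>b\<in>set bs. l \<bullet> b > 0"
    proof (rule ccontr)
      assume nb: "\<not> (\<exists>b\<in>set bs. l \<bullet> b > 0)"
      have "\<And>b. b \<in> set bs \<Longrightarrow> coroot b \<bullet> l \<le> 0"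
      proof -
        fix b assume bi: "b \<in> set bs"
        hence "b \<bullet> b > 0" using less.prems(1) rs_nz[OF rs] by auto
        moreover have "l \<bullet> b \<le> 0" using bi nb by force
        ultimately show "coroot b \<bullet> l \<le> 0"
          by (simp add: coroot_def inner_commute divide_nonpos_pos)
      qed
      hence "l \<bullet> l \<le> 0" using ll sum_list_nonpos by metis
      thus False using nz by (simp add: inner_gt_zero_iff not_less[symmetric])
    qed
    then obtain b where b: "b \<in> set bs" "l \<bullet> b > 0" by blast
    have bR: "b \<in> R" using b less.prems(1) by auto
    have "l \<bullet> b = sum_list (map (\<lambda>x. coroot x \<bullet> b) bs)"
      using less.prems(2) sum_list_inner by metis
    moreover have "\<And>x. x \<in> set bs \<Longrightarrow> coroot x \<bullet> b \<in> \<int>"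
    proof -
      fix x assume "x \<in> set bs"
      hence "x \<in> R" using less.prems(1) by auto
      hence "2 * (b \<bullet> x) / (x \<bullet> x) \<in> \<int>" using rs bR unfolding root_system_def by blast
      thus "coroot x \<bullet> b \<in> \<int>" by (simp add: coroot_def inner_commute)
    qed
    ultimately have "l \<bullet> b \<in> \<int>" using sum_list_Ints by metis
    then obtain k :: int where k: "l \<bullet> b = of_int k" by (metis Ints_cases)
    have "\<bar>l \<bullet> b\<bar> < 2" using less.prems(3) bR by auto
    with b(2) k have "k = 1" by auto
    with k have lb: "l \<bullet> b = 1" by simp
    define l' where "l' = l - coroot b"
    have l'eq: "l' = root_reflection b l"
      using lb by (simp add: l'_def root_reflection_def coroot_def)
    have l'sum: "l' = sum_list (map coroot (remove1 b bs))"
      using sum_list_map_remove1[OF b(1), of coroot] less.prems(2) by (simp add: l'_def)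
    have bb: "b \<bullet> b > 0" using rs_nz[OF rs bR] .
    have "\<forall>a\<in>R. \<bar>l' \<bullet> a\<bar> < 2"
    proof
      fix a assume aR: "a \<in> R"
      have "l' \<bullet> a = l \<bullet> root_reflection b a"
        unfolding l'eq root_reflection_def
        by (simp add: inner_diff_left inner_diff_right inner_commute)
      moreover have "root_reflection b a \<in> R" using rs bR aR unfolding root_system_def by blast
      ultimately show "\<bar>l' \<bullet> a\<bar> < 2" using less.prems(3) by auto
    qed
    moreover have "length (remove1 b bs) < length bs"
      using b(1) using length_pos_if_in_set[OF b(1)] by (simp add: length_remove1)
    moreover have "set (remove1 b bs) \<subseteq> R" using less.prems(1) set_remove1_subset by fastforce
    ultimately have "l' = 0" using less.hyps l'sum by blast
    hence "l = coroot b" by (simp add: l'_def)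
    hence "l \<bullet> b = 2" using bb by (simp add: coroot_def)
    with lb show False by simp
  qed
qed

theorem mainTheorem2:
  fixes R :: "'a::euclidean_space set" and \<mu> \<nu> :: 'a
  assumes "root_system R" and "normalized_form R"
    and "small R \<mu>" and "small R \<nu>"
    and "\<mu> - \<nu> \<in> coroot_lattice R"
  shows "\<mu> = \<nu>"
proof -
  obtain c where c: "\<mu> - \<nu> = (\<Sum>a\<in>R. of_int (c a) *\<^sub>R coroot a)"
    using assms(5) unfolding coroot_lattice_def by blast
  have fin: "finite R" using assms(1) unfolding root_system_def by blast
  obtain bs where bs: "set bs \<subseteq> R" "\<mu> - \<nu> = sum_list (map coroot bs)"
    using lattice_list[OF assms(1) fin, of c] c by auto
  have "\<forall>a\<in>R. \<bar>(\<mu> - \<nu>) \<bullet> a\<bar> < 2"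
  proof
    fix a assume aR: "a \<in> R"
    have na: "- a \<in> R" using rs_neg[OF assms(1) aR] .
    have "\<mu> \<bullet> a < 1" "\<nu> \<bullet> a < 1" "\<mu> \<bullet> (-a) < 1" "\<nu> \<bullet> (-a) < 1"
      using assms(3,4) aR na unfolding small_def by blast+
    thus "\<bar>(\<mu> - \<nu>) \<bullet> a\<bar> < 2" by (simp add: inner_diff_left)
  qed
  hence "\<mu> - \<nu> = 0" using key[OF assms(1) bs] by blast
  thus ?thesis by simp
qed

end
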